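(* Let $\mathscr H$ be a complex Hilbert space and $\mathbf{X},\mathbf{Y},\mathbf{Z},\mathbf{W}\in\mathbb{B}(\mathscr H)^d$. Then $$w_e\left(\begin{bmatrix}\mathbf{X}&\mathbf{Y}\\\mathbf{Z}&\mathbf{W}\end{bmatrix}\right)\ge\max\Big\{w_e(\mathbf{X}),w_e(\mathbf{W}),w_e\Big(\tfrac{\mathbf{Y}+\mathbf{Z}}{2}\Big),w_e\Big(\tfrac{\mathbf{Y}-\mathbf{Z}}{2}\Big)\Big\}$$ and $$w_e\left(\begin{bmatrix}\mathbf{X}&\mathbf{Y}\\\mathbf{Z}&\mathbf{W}\end{bmatrix}\right)\le\max\{w_e(\mathbf{X}),w_e(\mathbf{W})\}+w_e\Big(\tfrac{\mathbf{Y}+\mathbf{Z}}{2}\Big)+w_e\Big(\tfrac{\mathbf{Y}-\mathbf{Z}}{2}\Big).$$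
   Context: $\mathbb{B}(\mathscr H)$ denotes the bounded linear operators on $\mathscr H$. $w_e(\mathbf{T})=\sup\{(\sum_{k}|\langle T_kx,x\rangle|^2)^{1/2}: \|x\|=1\}$ for $\mathbf{T}=(T_1,\dots,T_d)$. Tuple sums and scalar multiples are componentwise. For $d$-tuples, $\begin{bmatrix}\mathbf{X}&\mathbf{Y}\\\mathbf{Z}&\mathbf{W}\end{bmatrix}$ denotes the $d$-tuple $\left(\begin{bmatrix}X_k&Y_k\\Z_k&W_k\end{bmatrix}\right)_{k=1}^d$ of operators on $\mathscr H\oplus\mathscr H$. *)

theory Defs
  imports Complex_Main
begin

class complex_hilbert = ab_group_add +
  fixes scaleC :: "complex \<Rightarrow> 'a \<Rightarrow> 'a"
  fixes cinner :: "'a \<Rightarrow> 'a \<Rightarrow> complex"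
  assumes scaleC_add_right: "scaleC a (x + y) = scaleC a x + scaleC a y"
    and scaleC_add_left: "scaleC (a + b) x = scaleC a x + scaleC b x"
    and scaleC_scaleC: "scaleC a (scaleC b x) = scaleC (a * b) x"
    and scaleC_one: "scaleC 1 x = x"
    and cinner_commute: "cinner x y = cnj (cinner y x)"
    and cinner_add_left: "cinner (x + y) z = cinner x z + cinner y z"
    and cinner_scaleC_left: "cinner (scaleC a x) y = cnj a * cinner x y"
    and cinner_ge_zero: "0 \<le> Re (cinner x x)"
    and cinner_eq_zero_iff: "cinner x x = 0 \<longleftrightarrow> x = 0"
    and cinner_complete:
      "(\<forall>e>0. \<exists>N::nat. \<forall>m\<ge>N. \<forall>n\<ge>N. Re (cinner ((f::nat \<Rightarrow> 'a) m - f n) (f m - f n)) < e)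
        \<Longrightarrow> (\<exists>l. \<forall>e>0. \<exists>N::nat. \<forall>n\<ge>N. Re (cinner (f n - l) (f n - l)) < e)"

definition hnorm :: "'a::complex_hilbert \<Rightarrow> real" where
  "hnorm x = sqrt (Re (cinner x x))"

definition bounded_op :: "('a::complex_hilbert \<Rightarrow> 'a) \<Rightarrow> bool" where
  "bounded_op T \<longleftrightarrow> (\<forall>x y. T (x + y) = T x + T y)
     \<and> (\<forall>a x. T (scaleC a x) = scaleC a (T x))
     \<and> (\<exists>K. \<forall>x. hnorm (T x) \<le> K * hnorm x)"

text \<open>The 0 is adjoined only to fix the
  value of the supremum on the trivial space (all values are nonnegative).\<close>
definition joint_numrad :: "('b \<Rightarrow> 'b \<Rightarrow> complex) \<Rightarrow> nat \<Rightarrow> (nat \<Rightarrow> 'b \<Rightarrow> 'b) \<Rightarrow> real" where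
  "joint_numrad ip d T =
     Sup (insert 0 {sqrt (\<Sum>k<d. (cmod (ip (T k x) x))\<^sup>2) | x. ip x x = 1})"

definition w_e :: "nat \<Rightarrow> (nat \<Rightarrow> 'a::complex_hilbert \<Rightarrow> 'a) \<Rightarrow> real" where
  "w_e d T = joint_numrad cinner d T"

definition tadd :: "(nat \<Rightarrow> 'a::complex_hilbert \<Rightarrow> 'a) \<Rightarrow> (nat \<Rightarrow> 'a \<Rightarrow> 'a) \<Rightarrow> nat \<Rightarrow> 'a \<Rightarrow> 'a" where
  "tadd S T = (\<lambda>k x. S k x + T k x)"
definition tsub :: "(nat \<Rightarrow> 'a::complex_hilbert \<Rightarrow> 'a) \<Rightarrow> (nat \<Rightarrow> 'a \<Rightarrow> 'a) \<Rightarrow> nat \<Rightarrow> 'a \<Rightarrow> 'a" where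
  "tsub S T = (\<lambda>k x. S k x - T k x)"
definition tscale :: "complex \<Rightarrow> (nat \<Rightarrow> 'a::complex_hilbert \<Rightarrow> 'a) \<Rightarrow> nat \<Rightarrow> 'a \<Rightarrow> 'a" where
  "tscale c T = (\<lambda>k x. scaleC c (T k x))"

definition dsum_inner :: "'a::complex_hilbert \<times> 'a \<Rightarrow> 'a \<times> 'a \<Rightarrow> complex" where
  "dsum_inner p q = cinner (fst p) (fst q) + cinner (snd p) (snd q)"

definition blockop :: "(nat \<Rightarrow> 'a::complex_hilbert \<Rightarrow> 'a) \<Rightarrow> (nat \<Rightarrow> 'a \<Rightarrow> 'a) \<Rightarrow>
    (nat \<Rightarrow> 'a \<Rightarrow> 'a) \<Rightarrow> (nat \<Rightarrow> 'a \<Rightarrow> 'a) \<Rightarrow> nat \<Rightarrow> 'a \<times> 'a \<Rightarrow> 'a \<times> 'a" where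
  "blockop X Y Z W = (\<lambda>k p. (X k (fst p) + Y k (snd p), Z k (fst p) + W k (snd p)))"

definition w_e_block :: "nat \<Rightarrow> (nat \<Rightarrow> 'a::complex_hilbert \<Rightarrow> 'a) \<Rightarrow> (nat \<Rightarrow> 'a \<Rightarrow> 'a) \<Rightarrow>
    (nat \<Rightarrow> 'a \<Rightarrow> 'a) \<Rightarrow> (nat \<Rightarrow> 'a \<Rightarrow> 'a) \<Rightarrow> real" where
  "w_e_block d X Y Z W = joint_numrad dsum_inner d (blockop X Y Z W)"

end

theory Submission
  imports Defs "HOL-Analysis.L2_Norm"
begin

lemma scaleC_zero_left[simp]: "scaleC 0 (x::'a::complex_hilbert) = 0"
proof -
  have "scaleC 0 x = scaleC 0 x + scaleC (0::complex) x"
    using scaleC_add_left[of 0 0 x] by simp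
  thus ?thesis by simp
qed

lemma scaleC_zero_right[simp]: "scaleC a (0::'a::complex_hilbert) = 0"
proof -
  have "scaleC a (0::'a) = scaleC a 0 + scaleC a 0"
    using scaleC_add_right[of a 0 0] by simp
  thus ?thesis by simp
qed

lemma scaleC_minus_right: "scaleC a (- x::'a::complex_hilbert) = - scaleC a x"
proof -
  have "scaleC a x + scaleC a (-x) = 0" using scaleC_add_right[of a x "-x"] by simp
  thus ?thesis by (simp add: add_eq_0_iff)
qed

lemma scaleC_diff_right: "scaleC a (x - y::'a::complex_hilbert) = scaleC a x - scaleC a y"
  using scaleC_add_right[of a x "-y"] by (simp add: scaleC_minus_right)

lemma cinner_add_right: "cinner (x::'a::complex_hilbert) (y + z) = cinner x y + cinner x z"
  by (metis cinner_commute cinner_add_left complex_cnj_add)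

lemma cinner_scaleC_right: "cinner (x::'a::complex_hilbert) (scaleC a y) = a * cinner x y"
  by (metis cinner_commute cinner_scaleC_left complex_cnj_mult complex_cnj_cnj)

lemma cinner_zero_left[simp]: "cinner (0::'a::complex_hilbert) y = 0"
proof -
  have "cinner (0::'a) y = cinner 0 y + cinner 0 y" using cinner_add_left[of "0::'a" 0 y] by simp
  thus ?thesis by simp
qed

lemma cinner_zero_right[simp]: "cinner (x::'a::complex_hilbert) 0 = 0"
  by (metis cinner_commute cinner_zero_left complex_cnj_zero)

lemma cinner_minus_left: "cinner (- x::'a::complex_hilbert) y = - cinner x y"
proof -
  have "cinner x y + cinner (-x) y = 0" using cinner_add_left[of x "-x" y] by simp
  thus ?thesis by (simp add: add_eq_0_iff)
qed

lemma cinner_minus_right: "cinner (x::'a::complex_hilbert) (- y) = - cinner x y"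
  by (metis cinner_commute cinner_minus_left complex_cnj_minus)

lemma cinner_diff_left: "cinner (x - y::'a::complex_hilbert) z = cinner x z - cinner y z"
  using cinner_add_left[of x "-y" z] by (simp add: cinner_minus_left)

lemma cinner_diff_right: "cinner (x::'a::complex_hilbert) (y - z) = cinner x y - cinner x z"
  using cinner_add_right[of x y "-z"] by (simp add: cinner_minus_right)

lemmas cinner_simps = cinner_add_left cinner_add_right cinner_scaleC_left cinner_scaleC_right
  cinner_diff_left cinner_diff_right cinner_minus_left cinner_minus_right

lemma cinner_self_real: "cinner (x::'a::complex_hilbert) x = complex_of_real (Re (cinner x x))"
proof -
  have "cinner x x = cnj (cinner x x)" using cinner_commute by metis
  hence "Im (cinner x x) = 0" by (metis Reals_cnj_iff complex_is_Real_iff)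
  thus ?thesis by (simp add: complex_eq_iff)
qed

lemma bounded_op_lin:
  assumes "bounded_op T"
  shows "T (x + y) = T x + T y" "T (scaleC a x) = scaleC a (T x)"
    "T (- x) = - T x" "T (x - y) = T x - T y" "T 0 = 0"
proof -
  show 1: "T (x + y) = T x + T y" for x y using assms unfolding bounded_op_def by blast
  show "T (scaleC a x) = scaleC a (T x)" using assms unfolding bounded_op_def by blast
  have z: "T 0 = 0" using 1[of 0 0] by simp
  thus "T 0 = 0" .
  have m: "T (- x) = - T x" for x using 1[of x "-x"] z by (simp add: add_eq_0_iff)
  thus "T (- x) = - T x" .
  show "T (x - y) = T x - T y" using 1[of x "-y"] m by simp
qed

lemma amgm_cinner:
  fixes x y :: "'a::complex_hilbert"
  shows "2 * cmod (cinner y x) \<le> Re (cinner y y) + Re (cinner x x)"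
proof -
  define \<alpha> where "\<alpha> = cinner y x"
  define a where "a = sgn \<alpha>"
  have ca: "cnj a * \<alpha> = cmod \<alpha>"
  proof (cases "\<alpha> = 0")
    case False
    have "cnj a * \<alpha> = (\<alpha> * cnj \<alpha>) / complex_of_real (cmod \<alpha>)"
      by (simp add: a_def sgn_div_norm divide_inverse mult.commute mult.left_commute scaleR_conv_of_real)
    also have "\<alpha> * cnj \<alpha> = complex_of_real (cmod \<alpha> ^ 2)" using complex_norm_square[of \<alpha>] by simp
    finally show ?thesis using False by (simp add: power2_eq_square)
  qed (simp add: a_def)
  have ca2: "Im (cnj a * a) = 0 \<and> Re (cnj a * a) \<le> 1"
  proof -
    have "cnj a * a = complex_of_real (cmod a ^ 2)" using complex_norm_square[of a] by (simp add: mult.commute)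
    moreover have "cmod a \<le> 1" by (simp add: a_def norm_sgn)
    hence "cmod a ^ 2 \<le> 1" by (simp add: power_le_one)
    ultimately show ?thesis by simp
  qed
  have "0 \<le> Re (cinner (scaleC a y - x) (scaleC a y - x))" by (rule cinner_ge_zero)
  also have "cinner (scaleC a y - x) (scaleC a y - x)
     = cnj a * a * cinner y y - cnj a * \<alpha> - a * cinner x y + cinner x x"
    by (simp add: cinner_simps \<alpha>_def algebra_simps)
  also have "a * cinner x y = cnj (cnj a * \<alpha>)"
    by (simp add: \<alpha>_def cinner_commute[of x y])
  finally have "0 \<le> Re (cnj a * a * cinner y y) - 2 * cmod \<alpha> + Re (cinner x x)"
    by (simp add: ca)
  moreover have "Re (cnj a * a * cinner y y) \<le> Re (cinner y y)"
  proof -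
    have "Re (cnj a * a * cinner y y) = Re (cnj a * a) * Re (cinner y y)"
      using ca2 by simp
    also have "\<dots> \<le> Re (cinner y y)"
      using ca2 cinner_ge_zero[of y] by (simp add: mult_left_le_one_le)
    finally show ?thesis .
  qed
  ultimately show ?thesis by (simp add: \<alpha>_def)
qed


definition nv :: "nat \<Rightarrow> (nat \<Rightarrow> complex) \<Rightarrow> real" where
  "nv d f = L2_set (\<lambda>k. cmod (f k)) {..<d}"

definition SS :: "('b \<Rightarrow> 'b \<Rightarrow> complex) \<Rightarrow> nat \<Rightarrow> (nat \<Rightarrow> 'b \<Rightarrow> 'b) \<Rightarrow> real set" where
  "SS ip d T = insert 0 {nv d (\<lambda>k. ip (T k x) x) | x. ip x x = 1}"

lemma jn_SS: "joint_numrad ip d T = Sup (SS ip d T)"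
  unfolding joint_numrad_def SS_def nv_def L2_set_def by simp

lemma nv_nonneg: "0 \<le> nv d f" by (simp add: nv_def)

lemma nv_add: "nv d (\<lambda>k. f k + g k) \<le> nv d f + nv d g"
proof -
  have "nv d (\<lambda>k. f k + g k) \<le> L2_set (\<lambda>k. cmod (f k) + cmod (g k)) {..<d}"
    unfolding nv_def by (rule L2_set_mono) (auto simp: norm_triangle_ineq)
  also have "\<dots> \<le> nv d f + nv d g" unfolding nv_def by (rule L2_set_triangle_ineq)
  finally show ?thesis .
qed

lemma nv_diff: "nv d (\<lambda>k. f k - g k) \<le> nv d f + nv d g"
proof -
  have "nv d (\<lambda>k. f k - g k) \<le> L2_set (\<lambda>k. cmod (f k) + cmod (g k)) {..<d}"
    unfolding nv_def by (rule L2_set_mono) (auto simp: norm_triangle_ineq4)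
  also have "\<dots> \<le> nv d f + nv d g" unfolding nv_def by (rule L2_set_triangle_ineq)
  finally show ?thesis .
qed

lemma nv_scale: "nv d (\<lambda>k. c * f k) = cmod c * nv d f"
  unfolding nv_def by (simp add: L2_set_right_distrib norm_mult)

lemma nv_cong: "(\<And>k. k < d \<Longrightarrow> f k = g k) \<Longrightarrow> nv d f = nv d g"
  unfolding nv_def by (rule L2_set_cong) auto

lemma jn_upper: "bdd_above (SS ip d T) \<Longrightarrow> ip x x = 1 \<Longrightarrow> nv d (\<lambda>k. ip (T k x) x) \<le> joint_numrad ip d T"
proof -
  assume b: "bdd_above (SS ip d T)" and u: "ip x x = 1"
  have "nv d (\<lambda>k. ip (T k x) x) \<in> SS ip d T" using u by (auto simp: SS_def)
  thus ?thesis unfolding jn_SS using b by (rule cSup_upper)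
qed

lemma jn_nonneg: "bdd_above (SS ip d T) \<Longrightarrow> 0 \<le> joint_numrad ip d T"
proof -
  assume b: "bdd_above (SS ip d T)"
  have "0 \<in> SS ip d T" by (auto simp: SS_def)
  thus ?thesis unfolding jn_SS using b by (rule cSup_upper)
qed

lemma jn_least: "(\<And>x. ip x x = 1 \<Longrightarrow> nv d (\<lambda>k. ip (T k x) x) \<le> M) \<Longrightarrow> 0 \<le> M \<Longrightarrow> joint_numrad ip d T \<le> M"
  unfolding jn_SS by (rule cSup_least) (auto simp: SS_def)

lemma cbound:
  fixes z x :: "'a::complex_hilbert"
  assumes "hnorm (T z) \<le> K * hnorm z" "Re (cinner z z) \<le> 1" "Re (cinner x x) \<le> 1"
  shows "cmod (cinner (T z) x) \<le> (K\<^sup>2 + 1) / 2"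
proof -
  have hz: "0 \<le> hnorm z" "hnorm z \<le> 1" using assms(2) cinner_ge_zero[of z] by (auto simp: hnorm_def)
  have "0 \<le> hnorm (T z)" using cinner_ge_zero[of "T z"] by (simp add: hnorm_def)
  hence "(hnorm (T z))\<^sup>2 \<le> (K * hnorm z)\<^sup>2" using assms(1) by (simp add: power_mono)
  also have "\<dots> = K\<^sup>2 * (hnorm z)\<^sup>2" by (simp add: power_mult_distrib)
  also have "\<dots> \<le> K\<^sup>2 * 1" using hz by (intro mult_left_mono) (auto simp: power_le_one)
  moreover have "(hnorm (T z))\<^sup>2 = Re (cinner (T z) (T z))" using cinner_ge_zero[of "T z"] by (simp add: hnorm_def)
  ultimately have "Re (cinner (T z) (T z)) \<le> K\<^sup>2" by simp
  thus ?thesis using amgm_cinner[of "T z" x] assms(3) by simp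
qed

lemma bdd_SS:
  fixes T :: "nat \<Rightarrow> 'a::complex_hilbert \<Rightarrow> 'a"
  assumes "\<forall>k<d. \<exists>B. \<forall>x. cinner x x = 1 \<longrightarrow> cmod (cinner (T k x) x) \<le> B"
  shows "bdd_above (SS cinner d T)"
proof -
  have "\<forall>k. \<exists>B. k < d \<longrightarrow> (\<forall>x. cinner x x = 1 \<longrightarrow> cmod (cinner (T k x) x) \<le> B)" using assms by auto
  then obtain B where B: "\<And>k x. k < d \<Longrightarrow> cinner x x = 1 \<Longrightarrow> cmod (cinner (T k x) x) \<le> B k" by metis
  have "\<forall>y\<in>SS cinner d T. y \<le> (\<Sum>k<d. \<bar>B k\<bar>)"
  proof
    fix y assume "y \<in> SS cinner d T"
    then consider "y = 0" | x where "y = nv d (\<lambda>k. cinner (T k x) x)" "cinner x x = 1" by (auto simp: SS_def)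
    thus "y \<le> (\<Sum>k<d. \<bar>B k\<bar>)"
    proof cases
      case 1 thus ?thesis by (simp add: sum_nonneg)
    next
      case 2
      have "y \<le> (\<Sum>k<d. cmod (cinner (T k x) x))" unfolding 2 nv_def by (rule L2_set_le_sum) simp
      also have "\<dots> \<le> (\<Sum>k<d. \<bar>B k\<bar>)" by (intro sum_mono) (use B 2 in force)
      finally show ?thesis .
    qed
  qed
  thus ?thesis by (auto intro: bdd_aboveI)
qed

lemma bop_bound:
  assumes "bounded_op (T::'a::complex_hilbert \<Rightarrow> 'a)"
  shows "\<exists>B. \<forall>z x. Re (cinner z z) \<le> 1 \<longrightarrow> Re (cinner x x) \<le> 1 \<longrightarrow> cmod (cinner (T z) x) \<le> B"
proof -
  obtain K where "\<forall>x. hnorm (T x) \<le> K * hnorm x" using assms unfolding bounded_op_def by blast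
  thus ?thesis using cbound by blast
qed

lemma bdd_block:
  fixes X Y Z W :: "nat \<Rightarrow> 'a::complex_hilbert \<Rightarrow> 'a"
  assumes "\<forall>k<d. bounded_op (X k) \<and> bounded_op (Y k) \<and> bounded_op (Z k) \<and> bounded_op (W k)"
  shows "bdd_above (SS dsum_inner d (blockop X Y Z W))"
proof -
  have "\<forall>k<d. \<exists>B. (\<forall>x y. dsum_inner (x,y) (x,y) = 1 \<longrightarrow>
     cmod (dsum_inner (blockop X Y Z W k (x,y)) (x,y)) \<le> B)"
  proof (intro allI impI)
    fix k assume k: "k < d"
    obtain B1 where B1: "\<forall>z x. Re (cinner z z) \<le> 1 \<longrightarrow> Re (cinner x x) \<le> 1 \<longrightarrow> cmod (cinner (X k z) x) \<le> B1"
      using bop_bound assms k by blast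
    obtain B2 where B2: "\<forall>z x. Re (cinner z z) \<le> 1 \<longrightarrow> Re (cinner x x) \<le> 1 \<longrightarrow> cmod (cinner (Y k z) x) \<le> B2"
      using bop_bound assms k by blast
    obtain B3 where B3: "\<forall>z x. Re (cinner z z) \<le> 1 \<longrightarrow> Re (cinner x x) \<le> 1 \<longrightarrow> cmod (cinner (Z k z) x) \<le> B3"
      using bop_bound assms k by blast
    obtain B4 where B4: "\<forall>z x. Re (cinner z z) \<le> 1 \<longrightarrow> Re (cinner x x) \<le> 1 \<longrightarrow> cmod (cinner (W k z) x) \<le> B4"
      using bop_bound assms k by blast
    show "\<exists>B. \<forall>x y. dsum_inner (x,y) (x,y) = 1 \<longrightarrow>
     cmod (dsum_inner (blockop X Y Z W k (x,y)) (x,y)) \<le> B"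
    proof (intro exI allI impI)
      fix x y :: 'a assume u: "dsum_inner (x,y) (x,y) = (1::complex)"
      hence "Re (cinner x x) + Re (cinner y y) = 1" by (simp add: dsum_inner_def complex_eq_iff)
      hence h: "Re (cinner x x) \<le> 1" "Re (cinner y y) \<le> 1" using cinner_ge_zero[of x] cinner_ge_zero[of y] by auto
      have "dsum_inner (blockop X Y Z W k (x,y)) (x,y) =
        cinner (X k x) x + cinner (Y k y) x + (cinner (Z k x) y + cinner (W k y) y)"
        by (simp add: dsum_inner_def blockop_def cinner_add_left)
      also have "cmod \<dots> \<le> B1 + B2 + (B3 + B4)"
        by (intro norm_triangle_le add_mono) (use B1 B2 B3 B4 h in auto)
      finally show "cmod (dsum_inner (blockop X Y Z W k (x,y)) (x,y)) \<le> B1 + B2 + (B3 + B4)" .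
    qed
  qed
  hence "\<forall>k. \<exists>B. k < d \<longrightarrow> (\<forall>x y. dsum_inner (x,y) (x,y) = 1 \<longrightarrow>
     cmod (dsum_inner (blockop X Y Z W k (x,y)) (x,y)) \<le> B)" by blast
  then obtain B where B: "\<And>k x y. k < d \<Longrightarrow> dsum_inner (x,y) (x,y) = 1 \<Longrightarrow>
     cmod (dsum_inner (blockop X Y Z W k (x,y)) (x,y)) \<le> B k" by metis
  have "\<forall>v\<in>SS dsum_inner d (blockop X Y Z W). v \<le> (\<Sum>k<d. \<bar>B k\<bar>)"
  proof
    fix v assume "v \<in> SS dsum_inner d (blockop X Y Z W)"
    then consider "v = 0" | p where "v = nv d (\<lambda>k. dsum_inner (blockop X Y Z W k p) p)" "dsum_inner p p = 1"
      by (auto simp: SS_def)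
    thus "v \<le> (\<Sum>k<d. \<bar>B k\<bar>)"
    proof cases
      case 1 thus ?thesis by (simp add: sum_nonneg)
    next
      case 2
      obtain x y where p: "p = (x,y)" by fastforce
      have "v \<le> (\<Sum>k<d. cmod (dsum_inner (blockop X Y Z W k p) p))" unfolding 2 nv_def by (rule L2_set_le_sum) simp
      also have "\<dots> \<le> (\<Sum>k<d. \<bar>B k\<bar>)" by (intro sum_mono) (use B 2 p in force)
      finally show ?thesis .
    qed
  qed
  thus ?thesis by (auto intro: bdd_aboveI)
qed

lemma hom:
  fixes T :: "nat \<Rightarrow> 'a::complex_hilbert \<Rightarrow> 'a"
  assumes lin: "\<And>k a z. k < d \<Longrightarrow> T k (scaleC a z) = scaleC a (T k z)"
    and bdd: "bdd_above (SS cinner d T)"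
  shows "nv d (\<lambda>k. cinner (T k z) z) \<le> Re (cinner z z) * w_e d T"
proof (cases "z = 0")
  case True
  thus ?thesis by (simp add: nv_def L2_set_0')
next
  case False
  define r where "r = Re (cinner z z)"
  have zr: "cinner z z = complex_of_real r" using cinner_self_real r_def by metis
  have "r \<noteq> 0" using False cinner_eq_zero_iff[of z] zr by auto
  hence r0: "r > 0" using cinner_ge_zero[of z] r_def by linarith
  define s where "s = 1 / sqrt r"
  define z' where "z' = scaleC (complex_of_real s) z"
  have ss: "s * s = 1 / r" using r0 by (simp add: s_def) 
  have "cinner z' z' = complex_of_real (s * s) * cinner z z"
    by (simp add: z'_def cinner_simps)
  also have "\<dots> = 1" using r0 by (simp add: ss zr)
  finally have u: "cinner z' z' = 1" .
  have "nv d (\<lambda>k. cinner (T k z') z') = nv d (\<lambda>k. complex_of_real (s*s) * cinner (T k z) z)"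
    by (rule nv_cong) (simp add: z'_def lin cinner_simps)
  also have "\<dots> = cmod (complex_of_real (s*s)) * nv d (\<lambda>k. cinner (T k z) z)"
    by (rule nv_scale)
  also have "\<dots> = (1 / r) * nv d (\<lambda>k. cinner (T k z) z)"
    by (subst norm_of_real) (use r0 in \<open>simp add: ss\<close>)
  finally have "(1/r) * nv d (\<lambda>k. cinner (T k z) z) \<le> w_e d T"
    using jn_upper[OF bdd u] unfolding w_e_def by simp
  thus ?thesis using r0 by (simp add: r_def field_simps)
qed


lemma halfc: "cnj (complex_of_real (1 / sqrt 2)) * complex_of_real (1 / sqrt 2) = 1/2"
proof -
  have "(1 / sqrt 2) * (1 / sqrt 2) = (1/2::real)" by (simp add: divide_simps)
  hence "complex_of_real (1 / sqrt 2) * complex_of_real (1 / sqrt 2) = complex_of_real (1/2)"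
    by (metis of_real_mult)
  thus ?thesis by simp
qed

theorem mainTheorem18:
  fixes X Y Z W :: "nat \<Rightarrow> 'a::complex_hilbert \<Rightarrow> 'a" and d :: nat
  assumes "1 \<le> d"
    and "\<forall>k<d. bounded_op (X k) \<and> bounded_op (Y k) \<and> bounded_op (Z k) \<and> bounded_op (W k)"
  shows "(max (w_e d X) (max (w_e d W) (max (w_e d (tscale (1/2) (tadd Y Z)))
            (w_e d (tscale (1/2) (tsub Y Z))))) \<le> w_e_block d X Y Z W)
    \<and> (w_e_block d X Y Z W \<le> max (w_e d X) (w_e d W)
            + w_e d (tscale (1/2) (tadd Y Z)) + w_e d (tscale (1/2) (tsub Y Z)))"
proof -
  define P where "P = tscale (1/2) (tadd Y Z)"
  define Q where "Q = tscale (1/2) (tsub Y Z)"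
  note bop = assms(2)
  have bX: "bounded_op (X k)" if "k < d" for k using bop that by blast
  have bY: "bounded_op (Y k)" if "k < d" for k using bop that by blast
  have bZ: "bounded_op (Z k)" if "k < d" for k using bop that by blast
  have bW: "bounded_op (W k)" if "k < d" for k using bop that by blast
  have bddB: "bdd_above (SS dsum_inner d (blockop X Y Z W))" using bdd_block[OF bop] .
  have unitRe: "Re (cinner x x) \<le> 1" if "cinner x x = 1" for x :: 'a using that by simp
  have bddX: "bdd_above (SS cinner d X)"
  proof (rule bdd_SS, intro allI impI)
    fix k assume k: "k < d"
    obtain B where "\<forall>z x. Re (cinner z z) \<le> 1 \<longrightarrow> Re (cinner x x) \<le> 1 \<longrightarrow> cmod (cinner (X k z) x) \<le> B"
      using bop_bound[OF bX[OF k]] by blast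
    thus "\<exists>B. \<forall>x. cinner x x = 1 \<longrightarrow> cmod (cinner (X k x) x) \<le> B" using unitRe by blast
  qed
  have bddW: "bdd_above (SS cinner d W)"
  proof (rule bdd_SS, intro allI impI)
    fix k assume k: "k < d"
    obtain B where "\<forall>z x. Re (cinner z z) \<le> 1 \<longrightarrow> Re (cinner x x) \<le> 1 \<longrightarrow> cmod (cinner (W k z) x) \<le> B"
      using bop_bound[OF bW[OF k]] by blast
    thus "\<exists>B. \<forall>x. cinner x x = 1 \<longrightarrow> cmod (cinner (W k x) x) \<le> B" using unitRe by blast
  qed
  have bddP: "bdd_above (SS cinner d P)"
  proof (rule bdd_SS, intro allI impI)
    fix k assume k: "k < d"
    obtain B1 where B1: "\<forall>z x. Re (cinner z z) \<le> 1 \<longrightarrow> Re (cinner x x) \<le> 1 \<longrightarrow> cmod (cinner (Y k z) x) \<le> B1"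
      using bop_bound[OF bY[OF k]] by blast
    obtain B2 where B2: "\<forall>z x. Re (cinner z z) \<le> 1 \<longrightarrow> Re (cinner x x) \<le> 1 \<longrightarrow> cmod (cinner (Z k z) x) \<le> B2"
      using bop_bound[OF bZ[OF k]] by blast
    show "\<exists>B. \<forall>x. cinner x x = 1 \<longrightarrow> cmod (cinner (P k x) x) \<le> B"
    proof (intro exI allI impI)
      fix x :: 'a assume u: "cinner x x = 1"
      have "cinner (P k x) x = (1/2) * (cinner (Y k x) x + cinner (Z k x) x)"
        by (simp add: P_def tscale_def tadd_def cinner_simps)
      also have "cmod \<dots> \<le> 1 * (B1 + B2)"
        unfolding norm_mult by (intro mult_mono norm_triangle_le add_mono) (use B1 B2 u in auto)
      finally show "cmod (cinner (P k x) x) \<le> 1 * (B1 + B2)" .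
    qed
  qed
  have bddQ: "bdd_above (SS cinner d Q)"
  proof (rule bdd_SS, intro allI impI)
    fix k assume k: "k < d"
    obtain B1 where B1: "\<forall>z x. Re (cinner z z) \<le> 1 \<longrightarrow> Re (cinner x x) \<le> 1 \<longrightarrow> cmod (cinner (Y k z) x) \<le> B1"
      using bop_bound[OF bY[OF k]] by blast
    obtain B2 where B2: "\<forall>z x. Re (cinner z z) \<le> 1 \<longrightarrow> Re (cinner x x) \<le> 1 \<longrightarrow> cmod (cinner (Z k z) x) \<le> B2"
      using bop_bound[OF bZ[OF k]] by blast
    show "\<exists>B. \<forall>x. cinner x x = 1 \<longrightarrow> cmod (cinner (Q k x) x) \<le> B"
    proof (intro exI allI impI)
      fix x :: 'a assume u: "cinner x x = 1"
      have "cinner (Q k x) x = (1/2) * (cinner (Y k x) x - cinner (Z k x) x)"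
        by (simp add: Q_def tscale_def tsub_def cinner_simps)
      also have "cmod \<dots> \<le> 1 * (B1 + B2)"
        unfolding norm_mult by (intro mult_mono norm_triangle_le_diff add_mono) (use B1 B2 u in auto)
      finally show "cmod (cinner (Q k x) x) \<le> 1 * (B1 + B2)" .
    qed
  qed
  have X1: "X k (u + v) = X k u + X k v" if "k < d" for k u v using bounded_op_lin(1)[OF bX[OF that]] .
  have X2: "X k (scaleC a u) = scaleC a (X k u)" if "k < d" for k a u using bounded_op_lin(2)[OF bX[OF that]] .
  have X3: "X k (u - v) = X k u - X k v" if "k < d" for k u v using bounded_op_lin(4)[OF bX[OF that]] .
  have X4: "X k (- u) = - X k u" if "k < d" for k u using bounded_op_lin(3)[OF bX[OF that]] .
  have X5: "X k 0 = 0" if "k < d" for k using bounded_op_lin(5)[OF bX[OF that]] .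
  have Y1: "Y k (u + v) = Y k u + Y k v" if "k < d" for k u v using bounded_op_lin(1)[OF bY[OF that]] .
  have Y2: "Y k (scaleC a u) = scaleC a (Y k u)" if "k < d" for k a u using bounded_op_lin(2)[OF bY[OF that]] .
  have Y3: "Y k (u - v) = Y k u - Y k v" if "k < d" for k u v using bounded_op_lin(4)[OF bY[OF that]] .
  have Y4: "Y k (- u) = - Y k u" if "k < d" for k u using bounded_op_lin(3)[OF bY[OF that]] .
  have Y5: "Y k 0 = 0" if "k < d" for k using bounded_op_lin(5)[OF bY[OF that]] .
  have Z1: "Z k (u + v) = Z k u + Z k v" if "k < d" for k u v using bounded_op_lin(1)[OF bZ[OF that]] .
  have Z2: "Z k (scaleC a u) = scaleC a (Z k u)" if "k < d" for k a u using bounded_op_lin(2)[OF bZ[OF that]] .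
  have Z3: "Z k (u - v) = Z k u - Z k v" if "k < d" for k u v using bounded_op_lin(4)[OF bZ[OF that]] .
  have Z4: "Z k (- u) = - Z k u" if "k < d" for k u using bounded_op_lin(3)[OF bZ[OF that]] .
  have Z5: "Z k 0 = 0" if "k < d" for k using bounded_op_lin(5)[OF bZ[OF that]] .
  have W1: "W k (u + v) = W k u + W k v" if "k < d" for k u v using bounded_op_lin(1)[OF bW[OF that]] .
  have W2: "W k (scaleC a u) = scaleC a (W k u)" if "k < d" for k a u using bounded_op_lin(2)[OF bW[OF that]] .
  have W3: "W k (u - v) = W k u - W k v" if "k < d" for k u v using bounded_op_lin(4)[OF bW[OF that]] .
  have W4: "W k (- u) = - W k u" if "k < d" for k u using bounded_op_lin(3)[OF bW[OF that]] .
  have W5: "W k 0 = 0" if "k < d" for k using bounded_op_lin(5)[OF bW[OF that]] .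

  note linr = X1 X2 X3 X4 X5 Y1 Y2 Y3 Y4 Y5 Z1 Z2 Z3 Z4 Z5 W1 W2 W3 W4 W5
  have nB: "0 \<le> w_e_block d X Y Z W" unfolding w_e_block_def by (rule jn_nonneg[OF bddB])
  have upB: "nv d (\<lambda>k. dsum_inner (blockop X Y Z W k p) p) \<le> w_e_block d X Y Z W" if "dsum_inner p p = 1" for p
    unfolding w_e_block_def by (rule jn_upper[OF bddB that])
  have lX: "w_e d X \<le> w_e_block d X Y Z W"
    unfolding w_e_def
  proof (rule jn_least[OF _ nB])
    fix x :: 'a assume u: "cinner x x = 1"
    have u': "dsum_inner (x, 0) (x, 0) = 1" using u by (simp add: dsum_inner_def)
    have "nv d (\<lambda>k. cinner (X k x) x) = nv d (\<lambda>k. dsum_inner (blockop X Y Z W k (x,0)) (x,0))"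
      by (rule nv_cong) (simp add: dsum_inner_def blockop_def linr)
    also have "\<dots> \<le> w_e_block d X Y Z W" by (rule upB[OF u'])
    finally show "nv d (\<lambda>k. cinner (X k x) x) \<le> w_e_block d X Y Z W" .
  qed
  have lW: "w_e d W \<le> w_e_block d X Y Z W"
    unfolding w_e_def
  proof (rule jn_least[OF _ nB])
    fix x :: 'a assume u: "cinner x x = 1"
    have u': "dsum_inner (0, x) (0, x) = 1" using u by (simp add: dsum_inner_def)
    have "nv d (\<lambda>k. cinner (W k x) x) = nv d (\<lambda>k. dsum_inner (blockop X Y Z W k (0,x)) (0,x))"
      by (rule nv_cong) (simp add: dsum_inner_def blockop_def linr)
    also have "\<dots> \<le> w_e_block d X Y Z W" by (rule upB[OF u'])
    finally show "nv d (\<lambda>k. cinner (W k x) x) \<le> w_e_block d X Y Z W" .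
  qed
  define c where "c = complex_of_real (1 / sqrt 2)"
  have hc: "cnj c * c = 1/2" unfolding c_def by (rule halfc)
  have lP: "w_e d P \<le> w_e_block d X Y Z W"
    unfolding w_e_def
  proof (rule jn_least[OF _ nB])
    fix x :: 'a assume u: "cinner x x = 1"
    define u1 where "u1 = (scaleC c x, scaleC c x)"
    define u2 where "u2 = (scaleC c x, scaleC (- c) x)"
    have "dsum_inner u1 u1 = 2 * (cnj c * c) * cinner x x"
      by (simp add: u1_def dsum_inner_def cinner_simps algebra_simps)
    hence n1: "dsum_inner u1 u1 = 1" using hc u by simp
    have "dsum_inner u2 u2 = 2 * (cnj c * c) * cinner x x"
      by (simp add: u2_def dsum_inner_def cinner_simps algebra_simps)
    hence n2: "dsum_inner u2 u2 = 1" using hc u by simp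
    have e1: "dsum_inner (blockop X Y Z W k u1) u1 = cnj c * c * (cinner (X k x) x + cinner (Y k x) x + cinner (Z k x) x + cinner (W k x) x)"
      if "k < d" for k
      using that by (simp add: u1_def dsum_inner_def blockop_def linr cinner_simps algebra_simps)
    have e2: "dsum_inner (blockop X Y Z W k u2) u2 = cnj c * c * (cinner (X k x) x - cinner (Y k x) x - cinner (Z k x) x + cinner (W k x) x)"
      if "k < d" for k
      using that by (simp add: u2_def dsum_inner_def blockop_def linr cinner_simps algebra_simps)
    have "nv d (\<lambda>k. cinner (P k x) x) = nv d (\<lambda>k. (1/2) * (dsum_inner (blockop X Y Z W k u1) u1 - dsum_inner (blockop X Y Z W k u2) u2))"
    proof (rule nv_cong)
      fix k assume k: "k < d"
      show "cinner (P k x) x = (1/2) * (dsum_inner (blockop X Y Z W k u1) u1 - dsum_inner (blockop X Y Z W k u2) u2)"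
        unfolding e1[OF k] e2[OF k] hc by (simp add: P_def tscale_def tadd_def cinner_simps algebra_simps)
    qed
    also have "\<dots> = cmod (1/2) * nv d (\<lambda>k. dsum_inner (blockop X Y Z W k u1) u1 - dsum_inner (blockop X Y Z W k u2) u2)"
      by (rule nv_scale)
    also have "\<dots> \<le> (1/2) * (w_e_block d X Y Z W + w_e_block d X Y Z W)"
      using nv_diff[of d "\<lambda>k. dsum_inner (blockop X Y Z W k u1) u1" "\<lambda>k. dsum_inner (blockop X Y Z W k u2) u2"]
        upB[OF n1] upB[OF n2] by simp
    finally show "nv d (\<lambda>k. cinner (P k x) x) \<le> w_e_block d X Y Z W" by simp
  qed
  have lQ: "w_e d Q \<le> w_e_block d X Y Z W"
    unfolding w_e_def
  proof (rule jn_least[OF _ nB])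
    fix x :: 'a assume u: "cinner x x = 1"
    define u1 where "u1 = (scaleC c x, scaleC (\<i> * c) x)"
    define u2 where "u2 = (scaleC c x, scaleC (- (\<i> * c)) x)"
    have "dsum_inner u1 u1 = 2 * (cnj c * c) * cinner x x"
      by (simp add: u1_def dsum_inner_def cinner_simps algebra_simps)
    hence n1: "dsum_inner u1 u1 = 1" using hc u by simp
    have "dsum_inner u2 u2 = 2 * (cnj c * c) * cinner x x"
      by (simp add: u2_def dsum_inner_def cinner_simps algebra_simps)
    hence n2: "dsum_inner u2 u2 = 1" using hc u by simp
    have e1: "dsum_inner (blockop X Y Z W k u1) u1 = cnj c * c * (cinner (X k x) x - \<i> * cinner (Y k x) x + \<i> * cinner (Z k x) x + cinner (W k x) x)"
      if "k < d" for k
      using that by (simp add: u1_def dsum_inner_def blockop_def linr cinner_simps algebra_simps)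
    have e2: "dsum_inner (blockop X Y Z W k u2) u2 = cnj c * c * (cinner (X k x) x + \<i> * cinner (Y k x) x - \<i> * cinner (Z k x) x + cinner (W k x) x)"
      if "k < d" for k
      using that by (simp add: u2_def dsum_inner_def blockop_def linr cinner_simps algebra_simps)
    have "nv d (\<lambda>k. cinner (Q k x) x) = nv d (\<lambda>k. (- \<i> / 2) * (dsum_inner (blockop X Y Z W k u2) u2 - dsum_inner (blockop X Y Z W k u1) u1))"
    proof (rule nv_cong)
      fix k assume k: "k < d"
      show "cinner (Q k x) x = (- \<i> / 2) * (dsum_inner (blockop X Y Z W k u2) u2 - dsum_inner (blockop X Y Z W k u1) u1)"
        unfolding e1[OF k] e2[OF k] hc by (simp add: Q_def tscale_def tsub_def cinner_simps algebra_simps)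
    qed
    also have "\<dots> = cmod (- \<i> / 2) * nv d (\<lambda>k. dsum_inner (blockop X Y Z W k u2) u2 - dsum_inner (blockop X Y Z W k u1) u1)"
      by (rule nv_scale)
    also have "\<dots> \<le> (1/2) * (w_e_block d X Y Z W + w_e_block d X Y Z W)"
      using nv_diff[of d "\<lambda>k. dsum_inner (blockop X Y Z W k u2) u2" "\<lambda>k. dsum_inner (blockop X Y Z W k u1) u1"]
        upB[OF n1] upB[OF n2] by (simp add: norm_divide)
    finally show "nv d (\<lambda>k. cinner (Q k x) x) \<le> w_e_block d X Y Z W" by simp
  qed
  have nX: "0 \<le> w_e d X" unfolding w_e_def by (rule jn_nonneg[OF bddX])
  have nW: "0 \<le> w_e d W" unfolding w_e_def by (rule jn_nonneg[OF bddW])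
  have nP: "0 \<le> w_e d P" unfolding w_e_def by (rule jn_nonneg[OF bddP])
  have nQ: "0 \<le> w_e d Q" unfolding w_e_def by (rule jn_nonneg[OF bddQ])
  have linP: "P k (scaleC a z) = scaleC a (P k z)" if "k < d" for k a z
    using that by (simp add: P_def tscale_def tadd_def Y2 Z2 scaleC_add_right scaleC_scaleC mult.commute)
  have linQ: "Q k (scaleC a z) = scaleC a (Q k z)" if "k < d" for k a z
    using that by (simp add: Q_def tscale_def tsub_def Y2 Z2 scaleC_diff_right scaleC_scaleC mult.commute)
  define M where "M = max (w_e d X) (w_e d W) + w_e d P + w_e d Q"
  have up: "w_e_block d X Y Z W \<le> M"
    unfolding w_e_block_def
  proof (rule jn_least)
    show "0 \<le> M" using nX nW nP nQ by (simp add: M_def le_max_iff_disj)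
  next
    fix p :: "'a \<times> 'a" assume u: "dsum_inner p p = 1"
    obtain x y where p: "p = (x,y)" by fastforce
    have s1: "Re (cinner x x) + Re (cinner y y) = 1" using u p by (simp add: dsum_inner_def complex_eq_iff)
    define A where "A = (\<lambda>k. cinner (X k x) x + cinner (W k y) y)"
    define F1 where "F1 = (\<lambda>k. cinner (P k (x+y)) (x+y))"
    define F2 where "F2 = (\<lambda>k. cinner (P k (x-y)) (x-y))"
    define G1 where "G1 = (\<lambda>k. cinner (Q k (x + scaleC \<i> y)) (x + scaleC \<i> y))"
    define G2 where "G2 = (\<lambda>k. cinner (Q k (x - scaleC \<i> y)) (x - scaleC \<i> y))"
    have ent: "dsum_inner (blockop X Y Z W k p) p = A k + ((1/2) * (F1 k - F2 k) + (\<i>/2) * (G1 k - G2 k))"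
      if "k < d" for k
      using that by (simp add: p A_def F1_def F2_def G1_def G2_def P_def Q_def tscale_def tadd_def tsub_def
          dsum_inner_def blockop_def linr cinner_simps scaleC_add_right scaleC_diff_right algebra_simps)
        (simp add: field_simps)
    have par1: "Re (cinner (x+y) (x+y)) + Re (cinner (x-y) (x-y)) = 2"
    proof -
      have "cinner (x+y) (x+y) + cinner (x-y) (x-y) = 2 * (cinner x x + cinner y y)"
        by (simp add: cinner_simps algebra_simps)
      hence "Re (cinner (x+y) (x+y)) + Re (cinner (x-y) (x-y)) = 2 * (Re (cinner x x) + Re (cinner y y))"
        by (metis Re_complex_of_real mult_2 plus_complex.sel(1))
      thus ?thesis using s1 by simp
    qed
    have par2: "Re (cinner (x + scaleC \<i> y) (x + scaleC \<i> y)) + Re (cinner (x - scaleC \<i> y) (x - scaleC \<i> y)) = 2"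
    proof -
      have "cinner (x + scaleC \<i> y) (x + scaleC \<i> y) + cinner (x - scaleC \<i> y) (x - scaleC \<i> y) = 2 * (cinner x x + cinner y y)"
        by (simp add: cinner_simps algebra_simps)
      hence "Re (cinner (x + scaleC \<i> y) (x + scaleC \<i> y)) + Re (cinner (x - scaleC \<i> y) (x - scaleC \<i> y)) = 2 * (Re (cinner x x) + Re (cinner y y))"
        by (metis Re_complex_of_real mult_2 plus_complex.sel(1))
      thus ?thesis using s1 by simp
    qed
    have hX: "nv d (\<lambda>k. cinner (X k x) x) \<le> Re (cinner x x) * w_e d X" by (rule hom[OF X2 bddX])
    have hW: "nv d (\<lambda>k. cinner (W k y) y) \<le> Re (cinner y y) * w_e d W" by (rule hom[OF W2 bddW])
    have hF1: "nv d F1 \<le> Re (cinner (x+y) (x+y)) * w_e d P" unfolding F1_def by (rule hom[OF linP bddP])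
    have hF2: "nv d F2 \<le> Re (cinner (x-y) (x-y)) * w_e d P" unfolding F2_def by (rule hom[OF linP bddP])
    have hG1: "nv d G1 \<le> Re (cinner (x + scaleC \<i> y) (x + scaleC \<i> y)) * w_e d Q" unfolding G1_def by (rule hom[OF linQ bddQ])
    have hG2: "nv d G2 \<le> Re (cinner (x - scaleC \<i> y) (x - scaleC \<i> y)) * w_e d Q" unfolding G2_def by (rule hom[OF linQ bddQ])
    have nA: "nv d A \<le> max (w_e d X) (w_e d W)"
    proof -
      have "nv d A \<le> nv d (\<lambda>k. cinner (X k x) x) + nv d (\<lambda>k. cinner (W k y) y)"
        unfolding A_def by (rule nv_add)
      also have "\<dots> \<le> Re (cinner x x) * max (w_e d X) (w_e d W) + Re (cinner y y) * max (w_e d X) (w_e d W)"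
        using hX hW cinner_ge_zero[of x] cinner_ge_zero[of y]
        by (smt (verit) max.cobounded1 max.cobounded2 mult_left_mono)
      also have "\<dots> = max (w_e d X) (w_e d W)" using s1 by (metis distrib_right mult_1)
      finally show ?thesis .
    qed
    have nF: "nv d (\<lambda>k. (1/2) * (F1 k - F2 k)) \<le> w_e d P"
    proof -
      have "nv d (\<lambda>k. (1/2) * (F1 k - F2 k)) = cmod (1/2) * nv d (\<lambda>k. F1 k - F2 k)" by (rule nv_scale)
      also have "\<dots> \<le> (1/2) * (nv d F1 + nv d F2)" using nv_diff[of d F1 F2] by simp
      also have "\<dots> \<le> (1/2) * ((Re (cinner (x+y) (x+y)) + Re (cinner (x-y) (x-y))) * w_e d P)"
        using hF1 hF2 by (simp add: algebra_simps)
      also have "\<dots> = w_e d P" using par1 by simp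
      finally show ?thesis .
    qed
    have nG: "nv d (\<lambda>k. (\<i>/2) * (G1 k - G2 k)) \<le> w_e d Q"
    proof -
      have "nv d (\<lambda>k. (\<i>/2) * (G1 k - G2 k)) = cmod (\<i>/2) * nv d (\<lambda>k. G1 k - G2 k)" by (rule nv_scale)
      also have "\<dots> \<le> (1/2) * (nv d G1 + nv d G2)" using nv_diff[of d G1 G2] by (simp add: norm_divide)
      also have "\<dots> \<le> (1/2) * ((Re (cinner (x + scaleC \<i> y) (x + scaleC \<i> y)) + Re (cinner (x - scaleC \<i> y) (x - scaleC \<i> y))) * w_e d Q)"
        using hG1 hG2 by (simp add: algebra_simps)
      also have "\<dots> = w_e d Q" using par2 by simp
      finally show ?thesis .
    qed
    have "nv d (\<lambda>k. dsum_inner (blockop X Y Z W k p) p) = nv d (\<lambda>k. A k + ((1/2) * (F1 k - F2 k) + (\<i>/2) * (G1 k - G2 k)))"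
      by (rule nv_cong) (rule ent)
    also have "\<dots> \<le> nv d A + nv d (\<lambda>k. (1/2) * (F1 k - F2 k) + (\<i>/2) * (G1 k - G2 k))" by (rule nv_add)
    also have "\<dots> \<le> nv d A + (nv d (\<lambda>k. (1/2) * (F1 k - F2 k)) + nv d (\<lambda>k. (\<i>/2) * (G1 k - G2 k)))"
      using nv_add[of d "\<lambda>k. (1/2) * (F1 k - F2 k)" "\<lambda>k. (\<i>/2) * (G1 k - G2 k)"] by simp
    also have "\<dots> \<le> M" unfolding M_def using nA nF nG by simp
    finally show "nv d (\<lambda>k. dsum_inner (blockop X Y Z W k p) p) \<le> M" .
  qed
  show ?thesis using lX lW lP lQ up by (simp add: P_def Q_def M_def)
qed

end
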